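(* Let $m,k,n\ge1$ be integers; let $\lambda_i,\mu_i>0$ ($i\le k$), $\alpha_j,\beta_j,u_j,v_j>0$ ($j\le n$); let $\theta:\{0,\dots,m\}\to\mathbb{R}$ satisfy $0\le\theta\le1$, $\theta(b)>0$ for $b<m$, $\theta(m)=0$. Consider the CTMC on the set $\mathcal{S}$ of vectors $(x_1,\dots,x_k;a_1,\dots,a_n)$, $x_i\in\mathbb{Z}_{\ge0}$, $a_j\in\{I,W,T\}$, with $\mathrm{busy}(w)=\sum_i x_i+\sum_j1_{\{a_j=T\}}\le m$, whose only nonzero rates are: $x\to x+e_i$ at rate $\lambda_i\theta(\mathrm{busy}(w))$ and $x+e_i\to x$ at rate $(x_i+1)\mu_i$; and, for each $j$ changing only $a_j$: $I\to W$ at rate $\alpha_j$, $W\to I$ at rate $\beta_j$, $W\to T$ at rate $u_j\theta(\mathrm{busy}(w))$ ($w$ the current state), $T\to W$ at rate $v_j$. Its steady state distribution is $p(w)=B\big(\prod_{r=0}^{\mathrm{busy}(w)-1}\theta(r)\big)\big(\prod_{i}\rho_i^{x_i}/x_i!\big)\prod_j(\alpha_j/\beta_j)^{1_{\{a_j=W\}}}(\alpha_ju_j/(\beta_jv_j))^{1_{\{a_j=T\}}}$ with normalizing constant $B$, where $\rho_i=\lambda_i/\mu_i$. For $a=(a_1,\dots,a_n)$ let $\mathrm{busy}_p(a)=\sum_{j=1}^n1_{\{a_j=T\}}$, and call $(x,a)$ with $x\in\mathbb{Z}_{\ge0}$ legitimate if $x+\mathrm{busy}_p(a)\le m$. Let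 $q(x;a_1,\dots,a_n)$ be the steady state probability that $\sum_{i=1}^kx_i=x$ and the persistent user states are $(a_1,\dots,a_n)$. Then for every legitimate $(x,a)$, $$q(x;a_1,\dots,a_n)=B\cdot\Big(\prod_{r=0}^{x+\mathrm{busy}_p(a)-1}\theta(r)\Big)\prod_{j=1}^n\Big(\frac{\alpha_j}{\beta_j}\Big)^{1_{\{a_j=W\}}}\Big(\frac{\alpha_ju_j}{\beta_jv_j}\Big)^{1_{\{a_j=T\}}}\frac{\rho^x}{x!},$$ with $\rho=\sum_{i=1}^k\rho_i$. Further, in the special case with no non-persistent users (the analogous CTMC on persistent states $a$ alone, i.e. $\rho\to0$), the steady state probability of $(a_1,\dots,a_n)$ is $$q(a_1,\dots,a_n)=B\cdot\Big(\prod_{r=0}^{\mathrm{busy}_p(a)-1}\theta(r)\Big)\prod_{j=1}^n\Big(\frac{\alpha_j}{\beta_j}\Big)^{1_{\{a_j=W\}}}\Big(\frac{\alpha_ju_j}{\beta_jv_j}\Big)^{1_{\{a_j=T\}}},$$ with $B$ the corresponding normalizing constant.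
   Context: Multi-channel access model with $m$ channels, $k$ classes of non-persistent users and $n$ persistent users with activity states Idle ($I$), Waiting ($W$), Transmitting ($T$). Empty products $\prod_{r=0}^{-1}\theta(r)$ equal $1$. *)

theory Defs
  imports Complex_Main
begin

datatype act = I | W | T

text \<open>A full state: occupancy vector x (classes indexed 0..<k) and persistent user
  states a (users indexed 0..<n); components outside the index ranges are fixed
  to 0 resp. I so that the state space is finite.\<close>
type_synonym state = "(nat \<Rightarrow> nat) \<times> (nat \<Rightarrow> act)"

definition busy_p :: "nat \<Rightarrow> (nat \<Rightarrow> act) \<Rightarrow> nat" where
  "busy_p n a = card {j. j < n \<and> a j = T}"

definition busy :: "nat \<Rightarrow> nat \<Rightarrow> state \<Rightarrow> nat" where
  "busy k n w = (\<Sum>i<k. fst w i) + busy_p n (snd w)"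

definition pstates :: "nat \<Rightarrow> nat \<Rightarrow> (nat \<Rightarrow> act) set" where
  "pstates m n = {a. (\<forall>j\<ge>n. a j = I) \<and> busy_p n a \<le> m}"

definition states :: "nat \<Rightarrow> nat \<Rightarrow> nat \<Rightarrow> state set" where
  "states m k n = {w. (\<forall>i\<ge>k. fst w i = 0) \<and> (\<forall>j\<ge>n. snd w j = I) \<and> busy k n w \<le> m}"

definition prate :: "nat \<Rightarrow> (nat \<Rightarrow> real) \<Rightarrow> (nat \<Rightarrow> real) \<Rightarrow> (nat \<Rightarrow> real) \<Rightarrow> (nat \<Rightarrow> real)
    \<Rightarrow> real \<Rightarrow> (nat \<Rightarrow> act) \<Rightarrow> (nat \<Rightarrow> act) \<Rightarrow> real" where
  "prate n \<alpha> \<beta> u v thb a a' =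
     (\<Sum>j<n. (if a j = I \<and> a' = a(j := W) then \<alpha> j else 0)
           + (if a j = W \<and> a' = a(j := I) then \<beta> j else 0)
           + (if a j = W \<and> a' = a(j := T) then u j * thb else 0)
           + (if a j = T \<and> a' = a(j := W) then v j else 0))"

definition rate :: "nat \<Rightarrow> nat \<Rightarrow> (nat \<Rightarrow> real) \<Rightarrow> (nat \<Rightarrow> real) \<Rightarrow> (nat \<Rightarrow> real)
    \<Rightarrow> (nat \<Rightarrow> real) \<Rightarrow> (nat \<Rightarrow> real) \<Rightarrow> (nat \<Rightarrow> real) \<Rightarrow> (nat \<Rightarrow> real)
    \<Rightarrow> state \<Rightarrow> state \<Rightarrow> real" where
  "rate k n lam \<mu> \<alpha> \<beta> u v \<theta> w w' =
     (let x = fst w; a = snd w; x' = fst w'; a' = snd w'; thb = \<theta> (busy k n w) in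
      (\<Sum>i<k. (if a' = a \<and> x' = x(i := x i + 1) then lam i * thb else 0)
            + (if a' = a \<and> x = x'(i := x' i + 1) then real (x' i + 1) * \<mu> i else 0))
      + (if x' = x then prate n \<alpha> \<beta> u v thb a a' else 0))"

definition prate_only :: "nat \<Rightarrow> (nat \<Rightarrow> real) \<Rightarrow> (nat \<Rightarrow> real) \<Rightarrow> (nat \<Rightarrow> real)
    \<Rightarrow> (nat \<Rightarrow> real) \<Rightarrow> (nat \<Rightarrow> real) \<Rightarrow> (nat \<Rightarrow> act) \<Rightarrow> (nat \<Rightarrow> act) \<Rightarrow> real" where
  "prate_only n \<alpha> \<beta> u v \<theta> a a' = prate n \<alpha> \<beta> u v (\<theta> (busy_p n a)) a a'"

definition stationary :: "'s set \<Rightarrow> ('s \<Rightarrow> 's \<Rightarrow> real) \<Rightarrow> ('s \<Rightarrow> real) \<Rightarrow> bool" where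
  "stationary S Q \<pi> \<longleftrightarrow>
     (\<forall>w\<in>S. \<pi> w \<ge> 0) \<and> (\<Sum>w\<in>S. \<pi> w) = 1 \<and>
     (\<forall>w\<in>S. \<pi> w * (\<Sum>w'\<in>S - {w}. Q w w') = (\<Sum>w'\<in>S - {w}. \<pi> w' * Q w' w))"

definition pweight :: "nat \<Rightarrow> (nat \<Rightarrow> real) \<Rightarrow> (nat \<Rightarrow> real) \<Rightarrow> (nat \<Rightarrow> real) \<Rightarrow> (nat \<Rightarrow> real)
    \<Rightarrow> (nat \<Rightarrow> act) \<Rightarrow> real" where
  "pweight n \<alpha> \<beta> u v a =
     (\<Prod>j<n. (if a j = W then \<alpha> j / \<beta> j else 1)
           * (if a j = T then \<alpha> j * u j / (\<beta> j * v j) else 1))"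

definition weight :: "nat \<Rightarrow> nat \<Rightarrow> (nat \<Rightarrow> real) \<Rightarrow> (nat \<Rightarrow> real) \<Rightarrow> (nat \<Rightarrow> real) \<Rightarrow> (nat \<Rightarrow> real)
    \<Rightarrow> (nat \<Rightarrow> real) \<Rightarrow> (nat \<Rightarrow> real) \<Rightarrow> (nat \<Rightarrow> real) \<Rightarrow> state \<Rightarrow> real" where
  "weight k n lam \<mu> \<alpha> \<beta> u v \<theta> w =
     (\<Prod>r<busy k n w. \<theta> r) * (\<Prod>i<k. (lam i / \<mu> i) ^ fst w i / fact (fst w i))
     * pweight n \<alpha> \<beta> u v (snd w)"

end

theory Submission
  imports Defs "HOL-Library.FuncSet"
begin


lemma upd_prod:
  fixes g :: "nat \<Rightarrow> 'b \<Rightarrow> real"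
  assumes "j < n"
  shows "(\<Prod>l<n. g l ((a(j:=y)) l)) * g j (a j) = (\<Prod>l<n. g l (a l)) * g j y"
proof -
  have A: "(\<Prod>l<n. g l ((a(j:=y)) l)) = g j y * (\<Prod>l\<in>{..<n}-{j}. g l ((a(j:=y)) l))"
    using assms by (subst prod.remove[of _ j]) auto
  have B: "(\<Prod>l<n. g l (a l)) = g j (a j) * (\<Prod>l\<in>{..<n}-{j}. g l (a l))"
    using assms by (subst prod.remove[of _ j]) auto
  have C: "(\<Prod>l\<in>{..<n}-{j}. g l ((a(j:=y)) l)) = (\<Prod>l\<in>{..<n}-{j}. g l (a l))"
    by (rule prod.cong) auto
  show ?thesis using A B C by simp
qed

lemma upd_sum:
  fixes g :: "nat \<Rightarrow> 'b \<Rightarrow> nat"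
  assumes "j < n"
  shows "(\<Sum>l<n. g l ((a(j:=y)) l)) + g j (a j) = (\<Sum>l<n. g l (a l)) + g j y"
proof -
  have A: "(\<Sum>l<n. g l ((a(j:=y)) l)) = g j y + (\<Sum>l\<in>{..<n}-{j}. g l ((a(j:=y)) l))"
    using assms by (subst sum.remove[of _ j]) auto
  have B: "(\<Sum>l<n. g l (a l)) = g j (a j) + (\<Sum>l\<in>{..<n}-{j}. g l (a l))"
    using assms by (subst sum.remove[of _ j]) auto
  have C: "(\<Sum>l\<in>{..<n}-{j}. g l ((a(j:=y)) l)) = (\<Sum>l\<in>{..<n}-{j}. g l (a l))"
    by (rule sum.cong) auto
  show ?thesis using A B C by simp
qed

lemma busy_p_upd:
  assumes "j < n"
  shows "busy_p n (a(j:=y)) + (if a j = T then 1 else 0) = busy_p n a + (if y = T then 1 else 0)"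
proof -
  define B where "B = {l. l < n \<and> l \<noteq> j \<and> a l = T}"
  have fB: "finite B" "j \<notin> B" unfolding B_def by auto
  have 1: "{l. l < n \<and> (a(j:=y)) l = T} = (if y = T then insert j B else B)"
    using assms unfolding B_def by auto
  have 2: "{l. l < n \<and> a l = T} = (if a j = T then insert j B else B)"
    using assms unfolding B_def by auto
  show ?thesis unfolding busy_p_def 1 2 using fB by auto
qed

lemma pweight_upd:
  assumes "j < n"
  shows "pweight n \<alpha> \<beta> u v (a(j:=y)) * ((if a j = W then \<alpha> j / \<beta> j else 1)
           * (if a j = T then \<alpha> j * u j / (\<beta> j * v j) else 1))
       = pweight n \<alpha> \<beta> u v a * ((if y = W then \<alpha> j / \<beta> j else 1)
           * (if y = T then \<alpha> j * u j / (\<beta> j * v j) else 1))"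
  unfolding pweight_def
  using upd_prod[OF assms, of "\<lambda>l s. (if s = W then \<alpha> l / \<beta> l else 1)
           * (if s = T then \<alpha> l * u l / (\<beta> l * v l) else 1)" a y] by simp



lemma IW_db:
  assumes j: "j < n" and pos: "\<forall>j<n. \<alpha> j > 0 \<and> \<beta> j > 0 \<and> u j > 0 \<and> v j > 0"
  shows "(\<Prod>r<c + busy_p n a. \<theta> r) * pweight n \<alpha> \<beta> u v a * (if a j = I \<and> a' = a(j := W) then \<alpha> j else 0)
       = (\<Prod>r<c + busy_p n a'. \<theta> r) * pweight n \<alpha> \<beta> u v a' * (if a' j = W \<and> a = a'(j := I) then \<beta> j else 0)"
proof (cases "a j = I \<and> a' = a(j := W)")
  case True
  then have c2: "a' j = W \<and> a = a'(j := I)" by auto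
  have bp: "busy_p n a' = busy_p n a" using busy_p_upd[OF j, of a W] True by simp
  have pw: "pweight n \<alpha> \<beta> u v a' = pweight n \<alpha> \<beta> u v a * (\<alpha> j / \<beta> j)"
    using pweight_upd[OF j, of \<alpha> \<beta> u v a W] True by simp
  have "\<beta> j > 0" using pos j by auto
  then show ?thesis using True c2 bp pw by simp
next
  case False
  then have c2: "\<not> (a' j = W \<and> a = a'(j := I))" by auto
  show ?thesis by (simp only: False c2 if_False mult_zero_right)
qed

lemma WT_db:
  assumes j: "j < n" and pos: "\<forall>j<n. \<alpha> j > 0 \<and> \<beta> j > 0 \<and> u j > 0 \<and> v j > 0"
  shows "(\<Prod>r<c + busy_p n a. \<theta> r) * pweight n \<alpha> \<beta> u v a * (if a j = W \<and> a' = a(j := T) then u j * \<theta> (c + busy_p n a) else 0)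
       = (\<Prod>r<c + busy_p n a'. \<theta> r) * pweight n \<alpha> \<beta> u v a' * (if a' j = T \<and> a = a'(j := W) then v j else 0)"
proof (cases "a j = W \<and> a' = a(j := T)")
  case True
  then have c2: "a' j = T \<and> a = a'(j := W)" by auto
  have bp: "busy_p n a' = Suc (busy_p n a)" using busy_p_upd[OF j, of a T] True by simp
  have pw: "pweight n \<alpha> \<beta> u v a' * (\<alpha> j / \<beta> j) = pweight n \<alpha> \<beta> u v a * (\<alpha> j * u j / (\<beta> j * v j))"
    using pweight_upd[OF j, of \<alpha> \<beta> u v a T] True by simp
  have p: "\<beta> j > 0" "\<alpha> j > 0" "v j > 0" using pos j by auto
  then have pw2: "pweight n \<alpha> \<beta> u v a' = pweight n \<alpha> \<beta> u v a * (u j / v j)"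
    using pw by (simp add: field_simps)
  show ?thesis using True c2 bp pw2 p by simp
next
  case False
  then have c2: "\<not> (a' j = T \<and> a = a'(j := W))" by auto
  show ?thesis by (simp only: False c2 if_False mult_zero_right)
qed

lemma prate_db:
  assumes pos: "\<forall>j<n. \<alpha> j > 0 \<and> \<beta> j > 0 \<and> u j > 0 \<and> v j > 0"
  shows "(\<Prod>r<c + busy_p n a. \<theta> r) * pweight n \<alpha> \<beta> u v a * prate n \<alpha> \<beta> u v (\<theta> (c + busy_p n a)) a a'
       = (\<Prod>r<c + busy_p n a'. \<theta> r) * pweight n \<alpha> \<beta> u v a' * prate n \<alpha> \<beta> u v (\<theta> (c + busy_p n a')) a' a"
  unfolding prate_def sum_distrib_left
proof (rule sum.cong[OF refl])
  fix j assume "j \<in> {..<n}"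
  then have j: "j < n" by simp
  note e1 = IW_db[OF j pos, where c=c and a=a and a'=a' and \<theta>=\<theta>] and e2 = IW_db[OF j pos, where c=c and a=a' and a'=a and \<theta>=\<theta>]
  note e3 = WT_db[OF j pos, where c=c and a=a and a'=a' and \<theta>=\<theta>] and e4 = WT_db[OF j pos, where c=c and a=a' and a'=a and \<theta>=\<theta>]
  show "(\<Prod>r<c + busy_p n a. \<theta> r) * pweight n \<alpha> \<beta> u v a *
         ((if a j = I \<and> a' = a(j := W) then \<alpha> j else 0) +
          (if a j = W \<and> a' = a(j := I) then \<beta> j else 0) +
          (if a j = W \<and> a' = a(j := T) then u j * \<theta> (c + busy_p n a) else 0) +
          (if a j = T \<and> a' = a(j := W) then v j else 0)) =
        (\<Prod>r<c + busy_p n a'. \<theta> r) * pweight n \<alpha> \<beta> u v a' *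
         ((if a' j = I \<and> a = a'(j := W) then \<alpha> j else 0) +
          (if a' j = W \<and> a = a'(j := I) then \<beta> j else 0) +
          (if a' j = W \<and> a = a'(j := T) then u j * \<theta> (c + busy_p n a') else 0) +
          (if a' j = T \<and> a = a'(j := W) then v j else 0))"
    using e1 e2 e3 e4 by (simp only: distrib_left)
qed



lemma AB_db:
  assumes i: "i < k" and pos: "lam i > 0" "\<mu> i > 0"
  shows "weight k n lam \<mu> \<alpha> \<beta> u v \<theta> (x,a) * (if a' = a \<and> x' = x(i := x i + 1) then lam i * \<theta> (busy k n (x,a)) else 0)
       = weight k n lam \<mu> \<alpha> \<beta> u v \<theta> (x',a') * (if a = a' \<and> x' = x(i := x i + 1) then real (x i + 1) * \<mu> i else 0)"
proof (cases "a' = a \<and> x' = x(i := x i + 1)")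
  case True
  then have xa: "a' = a" "x' = x(i := x i + 1)" by auto
  have s: "(\<Sum>l<k. x' l) = Suc (\<Sum>l<k. x l)"
    using upd_sum[OF i, of "\<lambda>l s. s" x "x i + 1"] xa by simp
  have bz: "busy k n (x',a') = Suc (busy k n (x,a))" unfolding busy_def using s xa by simp
  define g where "g l s = (lam l / \<mu> l) ^ s / fact s" for l and s :: nat
  have X: "(\<Prod>l<k. g l (x' l)) * g i (x i) = (\<Prod>l<k. g l (x l)) * g i (x i + 1)"
    using upd_prod[OF i, of g x "x i + 1"] xa by simp
  have gpos: "g i (x i) > 0" unfolding g_def using pos by simp
  have gs: "g i (x i + 1) = g i (x i) * ((lam i / \<mu> i) / real (x i + 1))"
    unfolding g_def by (simp add: field_simps)
  have X2: "(\<Prod>l<k. g l (x' l)) = (\<Prod>l<k. g l (x l)) * ((lam i / \<mu> i) / real (x i + 1))"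
  proof -
    have "(\<Prod>l<k. g l (x' l)) * g i (x i) = ((\<Prod>l<k. g l (x l)) * ((lam i / \<mu> i) / real (x i + 1))) * g i (x i)"
      using X unfolding gs by (simp only: mult_ac)
    moreover have "g i (x i) \<noteq> 0" using gpos by simp
    ultimately show ?thesis using mult_right_cancel by blast
  qed
  have X3: "(\<Prod>l<k. (lam l / \<mu> l) ^ x' l / fact (x' l)) = (\<Prod>l<k. (lam l / \<mu> l) ^ x l / fact (x l)) * ((lam i / \<mu> i) / real (x i + 1))"
    using X2 unfolding g_def .
  have key: "(lam i / \<mu> i / real (x i + 1)) * (real (x i + 1) * \<mu> i) = lam i"
  proof -
    have g: "\<And>r m l::real. r \<noteq> 0 \<Longrightarrow> m \<noteq> 0 \<Longrightarrow> l / m / r * (r * m) = l" by simp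
    show ?thesis by (rule g) (use pos in auto)
  qed
  have pr: "(\<Prod>r<Suc (busy k n (x,a)). \<theta> r) = (\<Prod>r<busy k n (x,a). \<theta> r) * \<theta> (busy k n (x,a))"
    by simp
  show ?thesis
    unfolding weight_def fst_conv snd_conv bz X3 pr
    apply (simp only: xa simp_thms if_True)
    apply (subst (1) key[symmetric])
    apply (simp only: mult_ac)
    done
next
  case False
  then have c2: "\<not> (a = a' \<and> x' = x(i := x i + 1))" by auto
  show ?thesis by (simp only: False c2 if_False mult_zero_right)
qed

lemma rate_db:
  assumes posk: "\<forall>i<k. lam i > 0 \<and> \<mu> i > 0"
    and pos: "\<forall>j<n. \<alpha> j > 0 \<and> \<beta> j > 0 \<and> u j > 0 \<and> v j > 0"
  shows "weight k n lam \<mu> \<alpha> \<beta> u v \<theta> w * rate k n lam \<mu> \<alpha> \<beta> u v \<theta> w w'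
       = weight k n lam \<mu> \<alpha> \<beta> u v \<theta> w' * rate k n lam \<mu> \<alpha> \<beta> u v \<theta> w' w"
proof -
  obtain x a where w: "w = (x,a)" by force
  obtain x' a' where w': "w' = (x',a')" by force
  let ?W = "weight k n lam \<mu> \<alpha> \<beta> u v \<theta>"
  have S1: "?W (x,a) * (\<Sum>i<k. (if a' = a \<and> x' = x(i := x i + 1) then lam i * \<theta> (busy k n (x,a)) else 0)
            + (if a' = a \<and> x = x'(i := x' i + 1) then real (x' i + 1) * \<mu> i else 0))
       = ?W (x',a') * (\<Sum>i<k. (if a = a' \<and> x = x'(i := x' i + 1) then lam i * \<theta> (busy k n (x',a')) else 0)
            + (if a = a' \<and> x' = x(i := x i + 1) then real (x i + 1) * \<mu> i else 0))"
    unfolding sum_distrib_left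
  proof (rule sum.cong[OF refl])
    fix i assume "i \<in> {..<k}"
    then have i: "i < k" by simp
    have p: "lam i > 0" "\<mu> i > 0" using posk i by auto
    note e1 = AB_db[where x=x and a=a and x'=x' and a'=a' and n=n and \<alpha>=\<alpha> and \<beta>=\<beta> and u=u and v=v and \<theta>=\<theta> and lam=lam and \<mu>=\<mu> and k=k and i=i, OF i p]
    note e2 = AB_db[where x=x' and a=a' and x'=x and a'=a and n=n and \<alpha>=\<alpha> and \<beta>=\<beta> and u=u and v=v and \<theta>=\<theta> and lam=lam and \<mu>=\<mu> and k=k and i=i, OF i p]
    show "?W (x,a) * ((if a' = a \<and> x' = x(i := x i + 1) then lam i * \<theta> (busy k n (x,a)) else 0)
            + (if a' = a \<and> x = x'(i := x' i + 1) then real (x' i + 1) * \<mu> i else 0))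
       = ?W (x',a') * ((if a = a' \<and> x = x'(i := x' i + 1) then lam i * \<theta> (busy k n (x',a')) else 0)
            + (if a = a' \<and> x' = x(i := x i + 1) then real (x i + 1) * \<mu> i else 0))"
      using e1 e2 by (simp only: distrib_left add.commute)
  qed
  have S2: "?W (x,a) * (if x' = x then prate n \<alpha> \<beta> u v (\<theta> (busy k n (x,a))) a a' else 0)
          = ?W (x',a') * (if x = x' then prate n \<alpha> \<beta> u v (\<theta> (busy k n (x',a'))) a' a else 0)"
  proof (cases "x' = x")
    case True
    have "(\<Prod>r<(\<Sum>i<k. x i) + busy_p n a. \<theta> r) * pweight n \<alpha> \<beta> u v a * prate n \<alpha> \<beta> u v (\<theta> ((\<Sum>i<k. x i) + busy_p n a)) a a'
       = (\<Prod>r<(\<Sum>i<k. x i) + busy_p n a'. \<theta> r) * pweight n \<alpha> \<beta> u v a' * prate n \<alpha> \<beta> u v (\<theta> ((\<Sum>i<k. x i) + busy_p n a')) a' a"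
      by (rule prate_db[OF pos])
    then show ?thesis using True unfolding weight_def busy_def fst_conv snd_conv
      by (simp add: algebra_simps)
  qed simp
  show ?thesis unfolding w w' rate_def Let_def fst_conv snd_conv
    using S1 S2 by (simp add: distrib_left eq_commute)
qed



lemma stat_unique:
  fixes S :: "'s set" and Q :: "'s \<Rightarrow> 's \<Rightarrow> real" and p \<pi> :: "'s \<Rightarrow> real" and f :: "'s \<Rightarrow> nat"
  assumes fin: "finite S" and zS: "z \<in> S"
    and ppos: "\<forall>w\<in>S. p w > 0"
    and Qnn: "\<forall>w\<in>S. \<forall>w'\<in>S. w \<noteq> w' \<longrightarrow> Q w w' \<ge> 0"
    and db: "\<forall>w\<in>S. \<forall>w'\<in>S. p w * Q w w' = p w' * Q w' w"
    and desc: "\<forall>w\<in>S. w \<noteq> z \<longrightarrow> (\<exists>w'\<in>S. f w' < f w \<and> Q w w' > 0)"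
    and st: "stationary S Q \<pi>"
  shows "\<forall>w\<in>S. \<pi> w = (1 / (\<Sum>w\<in>S. p w)) * p w"
proof -
  define h where "h w = \<pi> w / p w" for w
  have piw: "\<pi> w = h w * p w" if "w\<in>S" for w using ppos that by (auto simp add: h_def)
  have harm: "h w * (\<Sum>w'\<in>S-{w}. Q w w') = (\<Sum>w'\<in>S-{w}. h w' * Q w w')" if wS: "w\<in>S" for w
  proof -
    have "p w * (h w * (\<Sum>w'\<in>S-{w}. Q w w')) = \<pi> w * (\<Sum>w'\<in>S-{w}. Q w w')" using piw[OF wS] by simp
    also have "\<dots> = (\<Sum>w'\<in>S-{w}. \<pi> w' * Q w' w)" using st wS unfolding stationary_def by blast
    also have "\<dots> = (\<Sum>w'\<in>S-{w}. p w * (h w' * Q w w'))"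
    proof (rule sum.cong[OF refl])
      fix w' assume w': "w' \<in> S - {w}"
      have "\<pi> w' * Q w' w = h w' * (p w' * Q w' w)" using piw[of w'] w' by simp
      also have "\<dots> = h w' * (p w * Q w w')" using db wS w' by auto
      finally show "\<pi> w' * Q w' w = p w * (h w' * Q w w')" by simp
    qed
    also have "\<dots> = p w * (\<Sum>w'\<in>S-{w}. h w' * Q w w')" by (simp add: sum_distrib_left)
    finally show ?thesis using ppos wS by force
  qed
  define M where "M = Max (h ` S)"
  have hle: "h w \<le> M" if "w \<in> S" for w using fin that by (simp add: M_def)
  have "M \<in> h ` S" unfolding M_def using fin zS by (intro Max_in) auto
  then obtain w0 where w0: "w0 \<in> S" "h w0 = M" by auto
  have propg: "h w' = M" if wS: "w\<in>S" and w'S: "w'\<in>S" and ne: "w\<noteq>w'" and hw: "h w = M" and Qp: "Q w w' > 0" for w w'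
  proof -
    have "(\<Sum>y\<in>S-{w}. (M - h y) * Q w y) = M * (\<Sum>y\<in>S-{w}. Q w y) - (\<Sum>y\<in>S-{w}. h y * Q w y)"
      by (simp add: algebra_simps sum_subtractf sum_distrib_left)
    also have "\<dots> = 0" using harm[OF wS] hw by simp
    finally have z: "(\<Sum>y\<in>S-{w}. (M - h y) * Q w y) = 0" .
    have nn: "\<forall>y\<in>S-{w}. 0 \<le> (M - h y) * Q w y"
    proof
      fix y assume y: "y \<in> S - {w}"
      then have "0 \<le> M - h y" "0 \<le> Q w y" using hle Qnn wS by auto
      then show "0 \<le> (M - h y) * Q w y" by simp
    qed
    have "(M - h w') * Q w w' = 0"
      using sum_nonneg_eq_0_iff[of "S-{w}" "\<lambda>y. (M - h y) * Q w y"] fin z nn w'S ne by auto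
    then show ?thesis using Qp by simp
  qed
  have sym: "Q w' w > 0" if "w\<in>S" "w'\<in>S" "Q w w' > 0" for w w'
  proof -
    have "p w' * Q w' w > 0" using db that ppos by (metis mult_pos_pos)
    moreover have "p w' > 0" using ppos that by auto
    ultimately show ?thesis by (simp add: zero_less_mult_iff)
  qed
  have key: "\<forall>w\<in>S. f w = N \<longrightarrow> (h w = M \<longleftrightarrow> h z = M)" for N
  proof (induction N rule: less_induct)
    case (less N)
    show ?case
    proof (intro ballI impI)
      fix w assume wS: "w \<in> S" and fw: "f w = N"
      show "h w = M \<longleftrightarrow> h z = M"
      proof (cases "w = z")
        case False
        then obtain w' where w': "w' \<in> S" "f w' < f w" "Q w w' > 0" using desc wS by blast
        have ne: "w \<noteq> w'" using w' by auto
        have IH: "h w' = M \<longleftrightarrow> h z = M" using less w' fw by auto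
        have "h w = M \<longleftrightarrow> h w' = M"
          using propg[OF wS w'(1) ne _ w'(3)] propg[OF w'(1) wS ne[symmetric] _ sym[OF wS w'(1) w'(3)]] by blast
        then show ?thesis using IH by simp
      qed simp
    qed
  qed
  have hz: "h z = M" using key w0 by blast
  have all: "h w = M" if "w \<in> S" for w using key hz that by blast
  have "1 = (\<Sum>w\<in>S. \<pi> w)" using st unfolding stationary_def by simp
  also have "\<dots> = M * (\<Sum>w\<in>S. p w)" by (simp add: sum_distrib_left piw all)
  finally have MZ: "M * (\<Sum>w\<in>S. p w) = 1" by simp
  then have "M = 1 / (\<Sum>w\<in>S. p w)" by (auto simp add: eq_divide_eq)
  then show ?thesis using piw all by simp
qed



lemma finite_funs:
  fixes B :: "'b set" and d :: 'b
  assumes "finite B"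
  shows "finite {x :: nat \<Rightarrow> 'b. (\<forall>i\<ge>k. x i = d) \<and> (\<forall>i. x i \<in> B)}"
proof -
  have "{x :: nat \<Rightarrow> 'b. (\<forall>i\<ge>k. x i = d) \<and> (\<forall>i. x i \<in> B)}
        \<subseteq> (\<lambda>f i. if i < k then f i else d) ` (PiE {..<k} (\<lambda>_. B))"
  proof
    fix x assume x: "x \<in> {x :: nat \<Rightarrow> 'b. (\<forall>i\<ge>k. x i = d) \<and> (\<forall>i. x i \<in> B)}"
    have "x = (\<lambda>i. if i < k then restrict x {..<k} i else d)"
      using x by (auto simp: fun_eq_iff restrict_apply)
    moreover have "restrict x {..<k} \<in> PiE {..<k} (\<lambda>_. B)" using x by auto
    ultimately show "x \<in> (\<lambda>f i. if i < k then f i else d) ` (PiE {..<k} (\<lambda>_. B))" by blast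
  qed
  moreover have "finite (PiE {..<k} (\<lambda>_. B))" using assms by (simp add: finite_PiE)
  ultimately show ?thesis using finite_subset by blast
qed

lemma finite_act: "finite (UNIV :: act set)"
proof -
  have "(UNIV :: act set) \<subseteq> {I, W, T}" using act.exhaust by blast
  then show ?thesis by (rule finite_subset) simp
qed

definition comps :: "nat \<Rightarrow> nat \<Rightarrow> (nat \<Rightarrow> nat) set" where
  "comps k N = {x. (\<forall>i\<ge>k. x i = 0) \<and> (\<Sum>i<k. x i) = N}"

lemma finite_comps: "finite (comps k N)"
proof -
  have "comps k N \<subseteq> {x. (\<forall>i\<ge>k. x i = 0) \<and> (\<forall>i. x i \<in> {..N})}"
  proof
    fix x assume x: "x \<in> comps k N"
    have "x i \<le> N" for i
    proof (cases "i < k")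
      case True
      then have "x i \<le> (\<Sum>i<k. x i)" by (intro member_le_sum) auto
      then show ?thesis using x unfolding comps_def by simp
    next
      case False then show ?thesis using x unfolding comps_def by simp
    qed
    then show "x \<in> {x. (\<forall>i\<ge>k. x i = 0) \<and> (\<forall>i. x i \<in> {..N})}" using x unfolding comps_def by auto
  qed
  then show ?thesis using finite_funs[of "{..N}" k 0] finite_subset by blast
qed

lemma multinom:
  fixes \<rho> :: "nat \<Rightarrow> real"
  shows "(\<Sum>x\<in>comps k N. \<Prod>i<k. \<rho> i ^ x i / fact (x i)) = (\<Sum>i<k. \<rho> i) ^ N / fact N"
proof (induction k arbitrary: N)
  case 0
  have "comps 0 N = (if N = 0 then {\<lambda>_. 0} else {})" unfolding comps_def by auto
  then show ?case by simp
next
  case (Suc k)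
  let ?G = "\<lambda>x. \<Prod>i<k. \<rho> i ^ x i / fact (x i)"
  let ?S = "Sigma {..N} (\<lambda>j. comps k (N - j))"
  have F1: "x k \<le> N \<and> x(k := 0) \<in> comps k (N - x k)" if x: "x \<in> comps (Suc k) N" for x
  proof -
    from x have xs: "(\<Sum>i<k. x i) + x k = N" and x0: "\<forall>i\<ge>Suc k. x i = 0" unfolding comps_def by auto
    have "(\<Sum>i<k. (x(k := 0)) i) = (\<Sum>i<k. x i)" by (rule sum.cong) auto
    then show ?thesis using xs x0 unfolding comps_def by auto
  qed
  have F3: "y k = 0" if "y \<in> comps k M" for y M using that unfolding comps_def by auto
  have F2: "y(k := j) \<in> comps (Suc k) N" if "j \<le> N" "y \<in> comps k (N - j)" for j y
  proof -
    have ys: "(\<Sum>i<k. y i) = N - j" using that unfolding comps_def by auto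
    have "(\<Sum>i<k. (y(k := j)) i) = (\<Sum>i<k. y i)" by (rule sum.cong) auto
    then show ?thesis using that ys unfolding comps_def by auto
  qed
  have F4: "?G (x(k := j)) = ?G x" for x j by (rule prod.cong) auto
  have "(\<Sum>x\<in>comps (Suc k) N. \<Prod>i<Suc k. \<rho> i ^ x i / fact (x i))
      = (\<Sum>(j,y)\<in>?S. \<rho> k ^ j / fact j * ?G y)"
    apply (rule sum.reindex_bij_witness[where j = "\<lambda>x. (x k, x(k := 0))" and i = "\<lambda>(j,y). y(k := j)"])
    apply (auto simp: F1 F2 F3 F4)
    done
  also have "\<dots> = (\<Sum>j\<le>N. \<rho> k ^ j / fact j * (\<Sum>y\<in>comps k (N - j). ?G y))"
    by (subst sum.Sigma[symmetric]) (auto simp: finite_comps sum_distrib_left)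
  also have "\<dots> = (\<Sum>j\<le>N. \<rho> k ^ j / fact j * ((\<Sum>i<k. \<rho> i) ^ (N - j) / fact (N - j)))"
    using Suc.IH by simp
  also have "\<dots> = (\<Sum>j\<le>N. of_nat (N choose j) * \<rho> k ^ j * (\<Sum>i<k. \<rho> i) ^ (N - j)) / fact N"
    unfolding sum_divide_distrib
  proof (rule sum.cong[OF refl])
    fix j assume "j \<in> {..N}"
    then have j: "j \<le> N" by simp
    show "\<rho> k ^ j / fact j * ((\<Sum>i<k. \<rho> i) ^ (N - j) / fact (N - j))
        = of_nat (N choose j) * \<rho> k ^ j * (\<Sum>i<k. \<rho> i) ^ (N - j) / fact N"
      unfolding binomial_fact[OF j] by (simp add: field_simps)
  qed
  also have "\<dots> = (\<rho> k + (\<Sum>i<k. \<rho> i)) ^ N / fact N" by (simp only: binomial_ring)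
  finally show ?case by (simp add: add.commute)
qed



lemma prate_nn:
  assumes "thb \<ge> 0" and pos: "\<forall>j<n. \<alpha> j > 0 \<and> \<beta> j > 0 \<and> u j > 0 \<and> v j > 0"
  shows "prate n \<alpha> \<beta> u v thb a a' \<ge> 0"
  unfolding prate_def
proof (rule sum_nonneg)
  fix j assume "j \<in> {..<n}"
  then have "\<alpha> j > 0" "\<beta> j > 0" "u j > 0" "v j > 0" using pos by auto
  then show "0 \<le> (if a j = I \<and> a' = a(j := W) then \<alpha> j else 0) + (if a j = W \<and> a' = a(j := I) then \<beta> j else 0) +
         (if a j = W \<and> a' = a(j := T) then u j * thb else 0) + (if a j = T \<and> a' = a(j := W) then v j else 0)"
    using assms(1) by auto
qed

lemma prate_ge:
  assumes j: "j < n" and "thb \<ge> 0" and pos: "\<forall>j<n. \<alpha> j > 0 \<and> \<beta> j > 0 \<and> u j > 0 \<and> v j > 0"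
  shows "prate n \<alpha> \<beta> u v thb a a' \<ge> (if a j = W \<and> a' = a(j := I) then \<beta> j else 0) + (if a j = T \<and> a' = a(j := W) then v j else 0)"
proof -
  let ?t = "\<lambda>j. (if a j = I \<and> a' = a(j := W) then \<alpha> j else 0) + (if a j = W \<and> a' = a(j := I) then \<beta> j else 0) +
         (if a j = W \<and> a' = a(j := T) then u j * thb else 0) + (if a j = T \<and> a' = a(j := W) then v j else 0)"
  have nn: "\<forall>j\<in>{..<n}. 0 \<le> ?t j"
  proof
    fix j assume "j \<in> {..<n}"
    then have "\<alpha> j > 0" "\<beta> j > 0" "u j > 0" "v j > 0" using pos by auto
    then show "0 \<le> ?t j" using assms(2) by auto
  qed
  have "?t j \<le> (\<Sum>j<n. ?t j)" by (rule member_le_sum) (use j nn in auto)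
  moreover have "(if a j = W \<and> a' = a(j := I) then \<beta> j else 0) + (if a j = T \<and> a' = a(j := W) then v j else 0) \<le> ?t j"
    using pos j assms(2) by auto
  ultimately show ?thesis unfolding prate_def by linarith
qed

fun lvl :: "act \<Rightarrow> nat" where "lvl I = 0" | "lvl W = 1" | "lvl T = 2"

lemma pdesc:
  assumes j: "j < n" and aj: "a j \<noteq> I"
  obtains a' where "a' = a(j := I) \<or> a' = a(j := W)" "busy_p n a' \<le> busy_p n a"
    "(\<Sum>l<n. lvl (a' l)) < (\<Sum>l<n. lvl (a l))"
    "\<And>thb \<alpha> \<beta> u v. thb \<ge> 0 \<Longrightarrow> (\<forall>j<n. \<alpha> j > 0 \<and> \<beta> j > 0 \<and> u j > 0 \<and> v j > 0) \<Longrightarrow> prate n \<alpha> \<beta> u v thb a a' > 0"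
proof (cases "a j = W")
  case True
  have b: "busy_p n (a(j := I)) \<le> busy_p n a" using busy_p_upd[OF j, of a I] True by simp
  have l: "(\<Sum>l<n. lvl ((a(j := I)) l)) < (\<Sum>l<n. lvl (a l))" using upd_sum[OF j, of "\<lambda>l. lvl" a I] True by simp
  have "prate n \<alpha> \<beta> u v thb a (a(j := I)) > 0" if "thb \<ge> 0" "\<forall>j<n. \<alpha> j > 0 \<and> \<beta> j > 0 \<and> u j > 0 \<and> v j > 0" for thb \<alpha> \<beta> u v
    using prate_ge[OF j that, of a "a(j := I)"] True that(2) j by auto
  then show ?thesis using that b l by blast
next
  case False
  then have TT: "a j = T" using aj by (cases "a j") auto
  have b: "busy_p n (a(j := W)) \<le> busy_p n a" using busy_p_upd[OF j, of a W] TT by simp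
  have l: "(\<Sum>l<n. lvl ((a(j := W)) l)) < (\<Sum>l<n. lvl (a l))" using upd_sum[OF j, of "\<lambda>l. lvl" a W] TT by simp
  have "prate n \<alpha> \<beta> u v thb a (a(j := W)) > 0" if "thb \<ge> 0" "\<forall>j<n. \<alpha> j > 0 \<and> \<beta> j > 0 \<and> u j > 0 \<and> v j > 0" for thb \<alpha> \<beta> u v
  proof -
    have "a(j := W) \<noteq> a(j := I)" by (auto simp: fun_eq_iff)
    then show ?thesis using prate_ge[OF j that, of a "a(j := W)"] TT that(2) j by auto
  qed
  then show ?thesis using that b l by blast
qed



theorem corollary2:
  fixes m k n :: nat
    and lam \<mu> \<alpha> \<beta> u v \<theta> :: "nat \<Rightarrow> real"
    and \<pi> :: "state \<Rightarrow> real" and \<pi>p :: "(nat \<Rightarrow> act) \<Rightarrow> real"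
  assumes "m \<ge> 1" "k \<ge> 1" "n \<ge> 1"
    and "\<forall>i<k. lam i > 0 \<and> \<mu> i > 0"
    and "\<forall>j<n. \<alpha> j > 0 \<and> \<beta> j > 0 \<and> u j > 0 \<and> v j > 0"
    and "\<forall>b\<le>m. 0 \<le> \<theta> b \<and> \<theta> b \<le> 1"
    and "\<forall>b<m. \<theta> b > 0" and "\<theta> m = 0"
    and "stationary (states m k n) (rate k n lam \<mu> \<alpha> \<beta> u v \<theta>) \<pi>"
    and "stationary (pstates m n) (prate_only n \<alpha> \<beta> u v \<theta>) \<pi>p"
  shows "(\<forall>x a. a \<in> pstates m n \<and> x + busy_p n a \<le> m \<longrightarrow>
            (\<Sum>w\<in>{w \<in> states m k n. (\<Sum>i<k. fst w i) = x \<and> snd w = a}. \<pi> w)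
            = (1 / (\<Sum>w\<in>states m k n. weight k n lam \<mu> \<alpha> \<beta> u v \<theta> w))
              * (\<Prod>r<x + busy_p n a. \<theta> r) * pweight n \<alpha> \<beta> u v a
              * (\<Sum>i<k. lam i / \<mu> i) ^ x / fact x)
       \<and> (\<forall>a\<in>pstates m n.
            \<pi>p a = (1 / (\<Sum>a'\<in>pstates m n. (\<Prod>r<busy_p n a'. \<theta> r) * pweight n \<alpha> \<beta> u v a'))
                   * (\<Prod>r<busy_p n a. \<theta> r) * pweight n \<alpha> \<beta> u v a)"
proof -
  note posk = assms(4) and pos = assms(5) and th = assms(6) and thp = assms(7)
  let ?S = "states m k n" and ?P = "pstates m n"
  let ?Q = "rate k n lam \<mu> \<alpha> \<beta> u v \<theta>" and ?W = "weight k n lam \<mu> \<alpha> \<beta> u v \<theta>"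
  let ?Qp = "prate_only n \<alpha> \<beta> u v \<theta>"
  let ?Wp = "\<lambda>a. (\<Prod>r<busy_p n a. \<theta> r) * pweight n \<alpha> \<beta> u v a"
  have finP: "finite ?P"
  proof -
    have "?P \<subseteq> {a. (\<forall>j\<ge>n. a j = I) \<and> (\<forall>j. a j \<in> UNIV)}" unfolding pstates_def by auto
    then show ?thesis using finite_funs[OF finite_act, of n I] finite_subset by blast
  qed
  have finS: "finite ?S"
  proof -
    have "?S \<subseteq> {x. (\<forall>i\<ge>k. x i = 0) \<and> (\<forall>i. x i \<in> {..m})} \<times> {a. (\<forall>j\<ge>n. a j = I) \<and> (\<forall>j. a j \<in> UNIV)}"
    proof
      fix w assume w: "w \<in> ?S"
      obtain x a where xa: "w = (x,a)" by force
      have "x i \<le> m" for i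
      proof (cases "i < k")
        case True
        then have "x i \<le> (\<Sum>i<k. x i)" by (intro member_le_sum) auto
        then show ?thesis using w xa unfolding states_def busy_def by simp
      next
        case False then show ?thesis using w xa unfolding states_def by simp
      qed
      then show "w \<in> {x. (\<forall>i\<ge>k. x i = 0) \<and> (\<forall>i. x i \<in> {..m})} \<times> {a. (\<forall>j\<ge>n. a j = I) \<and> (\<forall>j. a j \<in> UNIV)}"
        using w xa unfolding states_def by auto
    qed
    moreover have "finite ({x. (\<forall>i\<ge>k. x i = 0) \<and> (\<forall>i. x i \<in> {..m})} \<times> {a. (\<forall>j\<ge>n. a j = I) \<and> (\<forall>j. a j \<in> UNIV)})"
      using finite_funs[OF finite_act, of n I] finite_funs[of "{..m}" k 0] by simp
    ultimately show ?thesis using finite_subset by blast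
  qed
  have Thpos: "(\<Prod>r<b. \<theta> r) > 0" if "b \<le> m" for b
    by (rule prod_pos) (use thp that in auto)
  have pwpos: "pweight n \<alpha> \<beta> u v a > 0" for a
    unfolding pweight_def by (rule prod_pos) (use pos in auto)
  have Xpos: "(\<Prod>i<k. (lam i / \<mu> i) ^ x i / fact (x i)) > 0" for x
    by (rule prod_pos) (use posk in auto)
  have Wpos: "\<forall>w\<in>?S. ?W w > 0"
    unfolding weight_def states_def using Thpos pwpos Xpos by auto
  have Wppos: "\<forall>a\<in>?P. ?Wp a > 0"
    unfolding pstates_def using Thpos pwpos by auto
  have Qnn: "\<forall>w\<in>?S. \<forall>w'\<in>?S. w \<noteq> w' \<longrightarrow> ?Q w w' \<ge> 0"
  proof (intro ballI impI)
    fix w w' assume w: "w \<in> ?S" and "w' \<in> ?S" "w \<noteq> w'"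
    have tb: "\<theta> (busy k n w) \<ge> 0" using w th unfolding states_def by auto
    show "?Q w w' \<ge> 0" unfolding rate_def Let_def
      using prate_nn[OF tb pos] tb posk
      by (auto intro!: add_nonneg_nonneg sum_nonneg)
  qed
  have Qpnn: "\<forall>w\<in>?P. \<forall>w'\<in>?P. w \<noteq> w' \<longrightarrow> ?Qp w w' \<ge> 0"
  proof (intro ballI impI)
    fix a a' assume a: "a \<in> ?P" and "a' \<in> ?P" "a \<noteq> a'"
    have tb: "\<theta> (busy_p n a) \<ge> 0" using a th unfolding pstates_def by auto
    show "?Qp a a' \<ge> 0" unfolding prate_only_def using prate_nn[OF tb pos] by simp
  qed
  have db: "\<forall>w\<in>?S. \<forall>w'\<in>?S. ?W w * ?Q w w' = ?W w' * ?Q w' w"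
    using rate_db[OF posk pos] by blast
  have dbp: "\<forall>w\<in>?P. \<forall>w'\<in>?P. ?Wp w * ?Qp w w' = ?Wp w' * ?Qp w' w"
    unfolding prate_only_def using prate_db[OF pos, where c=0] by simp
  let ?z = "(\<lambda>_::nat. 0::nat, \<lambda>_::nat. I)"
  let ?f = "\<lambda>w::state. (\<Sum>i<k. fst w i) + (\<Sum>j<n. lvl (snd w j))"
  have zS: "?z \<in> ?S" unfolding states_def busy_def busy_p_def by simp
  have zP: "(\<lambda>_. I) \<in> ?P" unfolding pstates_def busy_p_def by simp
  have desc: "\<forall>w\<in>?S. w \<noteq> ?z \<longrightarrow> (\<exists>w'\<in>?S. ?f w' < ?f w \<and> ?Q w w' > 0)"
  proof (intro ballI impI)
    fix w assume w: "w \<in> ?S" and ne: "w \<noteq> ?z"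
    obtain x a where xa: "w = (x, a)" by force
    have x0: "\<forall>i\<ge>k. x i = 0" and a0: "\<forall>j\<ge>n. a j = I" and bw: "(\<Sum>i<k. x i) + busy_p n a \<le> m"
      using w xa unfolding states_def busy_def by auto
    have tb: "\<theta> (busy k n w) \<ge> 0" using w th unfolding states_def by auto
    have Tnn: "0 \<le> (if a' = a \<and> x' = x(i := x i + 1) then lam i * \<theta> (busy k n w) else 0)
            + (if a' = a \<and> x = x'(i := x' i + 1) then real (x' i + 1) * \<mu> i else 0)" if "i < k" for i x' a'
      using posk that tb by auto
    show "\<exists>w'\<in>?S. ?f w' < ?f w \<and> ?Q w w' > 0"
    proof (cases "\<exists>i. x i \<noteq> 0")
      case True
      then obtain i where xi: "x i \<noteq> 0" by auto
      have i: "i < k" using xi x0 by (meson not_le)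
      define x' where "x' = x(i := x i - 1)"
      have s: "(\<Sum>l<k. x' l) + x i = (\<Sum>l<k. x l) + (x i - 1)"
        using upd_sum[OF i, of "\<lambda>l s. s" x "x i - 1"] unfolding x'_def by simp
      have w'S: "(x', a) \<in> ?S" using x0 a0 bw s i xi unfolding states_def busy_def x'_def by auto
      have fl: "?f (x', a) < ?f w" using s xi xa by simp
      have xback: "x'(i := x' i + 1) = x" using xi unfolding x'_def by (auto simp: fun_eq_iff)
      let ?T = "\<lambda>l. (if a = a \<and> x' = x(l := x l + 1) then lam l * \<theta> (busy k n w) else 0)
            + (if a = a \<and> x = x'(l := x' l + 1) then real (x' l + 1) * \<mu> l else 0)"
      have Tn: "\<And>l. l \<in> {..<k} - {i} \<Longrightarrow> 0 \<le> ?T l" using Tnn[where x'=x' and a'=a] by blast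
      have "?T i \<le> (\<Sum>l<k. ?T l)" by (rule member_le_sum) (use i Tn in auto)
      moreover have "real (x' i + 1) * \<mu> i \<le> ?T i" using xback posk i tb by auto
      moreover have "real (x' i + 1) * \<mu> i > 0" using posk i by simp
      moreover have "0 \<le> (if x' = x then prate n \<alpha> \<beta> u v (\<theta> (busy k n w)) a a else 0)"
        using prate_nn[OF tb pos] by simp
      ultimately have "?Q w (x', a) > 0" unfolding rate_def Let_def xa fst_conv snd_conv
        using xa by (smt (verit))
      then show ?thesis using w'S fl by blast
    next
      case False
      then have xz: "x = (\<lambda>_. 0)" by auto
      then have "a \<noteq> (\<lambda>_. I)" using ne xa by auto
      then obtain j where aj: "a j \<noteq> I" by auto
      have j: "j < n" using a0 aj by (meson not_le)
      obtain a' where a': "a' = a(j := I) \<or> a' = a(j := W)" "busy_p n a' \<le> busy_p n a"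
        "(\<Sum>l<n. lvl (a' l)) < (\<Sum>l<n. lvl (a l))"
        "\<And>thb \<alpha> \<beta> u v. thb \<ge> 0 \<Longrightarrow> (\<forall>j<n. \<alpha> j > 0 \<and> \<beta> j > 0 \<and> u j > 0 \<and> v j > 0) \<Longrightarrow> prate n \<alpha> \<beta> u v thb a a' > 0"
        using pdesc[where a=a and j=j and n=n, OF j aj] by blast
      have w'S: "(x, a') \<in> ?S" using x0 a0 bw a'(1,2) j unfolding states_def busy_def by auto
      have fl: "?f (x, a') < ?f w" using a'(3) xa by simp
      have "0 \<le> (\<Sum>l<k. (if a' = a \<and> x = x(l := x l + 1) then lam l * \<theta> (busy k n w) else 0)
            + (if a' = a \<and> x = x(l := x l + 1) then real (x l + 1) * \<mu> l else 0))"
        by (rule sum_nonneg) (use Tnn[where x'=x and a'=a'] in blast)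
      moreover have "prate n \<alpha> \<beta> u v (\<theta> (busy k n w)) a a' > 0" using a'(4)[OF tb pos] .
      ultimately have "?Q w (x, a') > 0" unfolding rate_def Let_def xa fst_conv snd_conv
        using xa by simp
      then show ?thesis using w'S fl by blast
    qed
  qed
  have descp: "\<forall>a\<in>?P. a \<noteq> (\<lambda>_. I) \<longrightarrow> (\<exists>a'\<in>?P. (\<Sum>j<n. lvl (a' j)) < (\<Sum>j<n. lvl (a j)) \<and> ?Qp a a' > 0)"
  proof (intro ballI impI)
    fix a assume a: "a \<in> ?P" and ne: "a \<noteq> (\<lambda>_. I)"
    then obtain j where aj: "a j \<noteq> I" by auto
    have j: "j < n" using a aj unfolding pstates_def using not_le by auto
    have tb: "\<theta> (busy_p n a) \<ge> 0" using a th unfolding pstates_def by auto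
    obtain a' where a': "a' = a(j := I) \<or> a' = a(j := W)" "busy_p n a' \<le> busy_p n a"
      "(\<Sum>l<n. lvl (a' l)) < (\<Sum>l<n. lvl (a l))"
      "\<And>thb \<alpha> \<beta> u v. thb \<ge> 0 \<Longrightarrow> (\<forall>j<n. \<alpha> j > 0 \<and> \<beta> j > 0 \<and> u j > 0 \<and> v j > 0) \<Longrightarrow> prate n \<alpha> \<beta> u v thb a a' > 0"
      using pdesc[where a=a and j=j and n=n, OF j aj] by blast
    have "a' \<in> ?P" using a a'(1,2) j unfolding pstates_def by auto
    moreover have "?Qp a a' > 0" unfolding prate_only_def using a'(4)[OF tb pos] .
    ultimately show "\<exists>a'\<in>?P. (\<Sum>j<n. lvl (a' j)) < (\<Sum>j<n. lvl (a j)) \<and> ?Qp a a' > 0" using a'(3) by blast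
  qed
  have U: "\<forall>w\<in>?S. \<pi> w = (1 / (\<Sum>w\<in>?S. ?W w)) * ?W w"
    by (rule stat_unique[OF finS zS Wpos Qnn db desc assms(9)])
  have Up: "\<forall>a\<in>?P. \<pi>p a = (1 / (\<Sum>a\<in>?P. ?Wp a)) * ?Wp a"
    by (rule stat_unique[OF finP zP Wppos Qpnn dbp descp assms(10)])
  have part1: "(\<Sum>w\<in>{w \<in> ?S. (\<Sum>i<k. fst w i) = x \<and> snd w = a}. \<pi> w)
            = (1 / (\<Sum>w\<in>?S. ?W w)) * (\<Prod>r<x + busy_p n a. \<theta> r) * pweight n \<alpha> \<beta> u v a
              * (\<Sum>i<k. lam i / \<mu> i) ^ x / fact x"
    if a: "a \<in> ?P" and xa: "x + busy_p n a \<le> m" for x a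
  proof -
    have set: "{w \<in> ?S. (\<Sum>i<k. fst w i) = x \<and> snd w = a} = (\<lambda>y. (y, a)) ` comps k x"
      using a xa unfolding states_def pstates_def comps_def busy_def by auto
    have inj: "inj_on (\<lambda>y. (y, a)) (comps k x)" by (auto simp: inj_on_def)
    have "(\<Sum>w\<in>{w \<in> ?S. (\<Sum>i<k. fst w i) = x \<and> snd w = a}. \<pi> w) = (\<Sum>y\<in>comps k x. \<pi> (y, a))"
      unfolding set by (simp add: sum.reindex[OF inj])
    also have "\<dots> = (\<Sum>y\<in>comps k x. (1 / (\<Sum>w\<in>?S. ?W w)) * ((\<Prod>r<x + busy_p n a. \<theta> r) * pweight n \<alpha> \<beta> u v a)
         * (\<Prod>i<k. (lam i / \<mu> i) ^ y i / fact (y i)))"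
    proof (rule sum.cong[OF refl])
      fix y assume y: "y \<in> comps k x"
      then have yS: "(y, a) \<in> ?S" using set by auto
      have "busy k n (y, a) = x + busy_p n a" using y unfolding busy_def comps_def by simp
      then show "\<pi> (y, a) = (1 / (\<Sum>w\<in>?S. ?W w)) * ((\<Prod>r<x + busy_p n a. \<theta> r) * pweight n \<alpha> \<beta> u v a)
         * (\<Prod>i<k. (lam i / \<mu> i) ^ y i / fact (y i))"
        using U yS unfolding weight_def by (simp add: mult_ac)
    qed
    also have "\<dots> = (1 / (\<Sum>w\<in>?S. ?W w)) * ((\<Prod>r<x + busy_p n a. \<theta> r) * pweight n \<alpha> \<beta> u v a)
         * ((\<Sum>i<k. lam i / \<mu> i) ^ x / fact x)"
      by (simp only: sum_distrib_left[symmetric] multinom)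
    finally show ?thesis by simp
  qed
  show ?thesis using part1 Up by auto
qed

end
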